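(* Let $l\in\mathbb{N}$ and, for $\alpha\in\mathcal{E}$, put $\Phi(\alpha)=\omega^3\cdot\alpha+\omega^3+l+2$. Let $E(x)=2^{2^{2^x}}$. Suppose $X=\{x_0<\dots<x_{|X|-1}\}$ is a finite set of natural numbers, all greater than $2$, which is $\Phi(\gamma_0)$-large. Suppose $\gamma_0>\gamma_1>\dots>\gamma_j$ are in $\mathcal{E}$ and $\mathrm{MC}(\gamma_i)\leq E(x_i+l)$ holds for every $i\leq j$ for which $x_i$ is defined (i.e. $i\leq|X|-1$). Then $j\leq|X|-1$.
   Context: $\mathcal{E}$ is the set of ordinal notations below $\varepsilon_0$: formal sums $\omega^{\alpha_0}+\dots+\omega^{\alpha_n}$ with $\alpha_0\geq\dots\geq\alpha_n\in\mathcal{E}$ (the empty sum is $0$). The order is lexicographic: $\omega^{\alpha_0}+\dots+\omega^{\alpha_n}<\omega^{\beta_0}+\dots+\omega^{\beta_m}$ iff either $n<m$ and $\alpha_i=\beta_i$ for all $i\leq n$, or there is $i\leq\min\{n,m\}$ with $\alpha_j=\beta_j$ for $j<i$ and $\alpha_i<\beta_i$. Here $1=\omega^0$, $k=1+\dots+1$, $\omega=\omega^1$; $+$ and $\cdot$ are the usual ordinal addition and multiplication on notations. Every $\alpha$ has a Cantor normal form $\omega^{\alpha_0}a_0+\dots+\omega^{\alpha_n}a_n$ with $\alpha_0>\dots>\alpha_n$ and positive integers $a_i$. The maximal coefficient is $\mathrm{MC}(0)=0$ and $\mathrm{MC}(\alpha)=\max_i\{a_i,\mathrm{MC}(\alpha_i)\}$.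 Fundamental sequences, for $\alpha=\omega^{\alpha_0}+\dots+\omega^{\alpha_n}$ and $x\in\mathbb{N}$: $0[x]=0$. If $\alpha_n=0$ then $\alpha[x]=\omega^{\alpha_0}+\dots+\omega^{\alpha_{n-1}}$. If $\alpha_n=\beta+1$ then $\alpha[x]=\omega^{\alpha_0}+\dots+\omega^{\alpha_{n-1}}+\omega^\beta\cdot x$. If $\alpha_n$ is a nonzero non-successor then $\alpha[x]=\omega^{\alpha_0}+\dots+\omega^{\alpha_{n-1}}+\omega^{\alpha_n[x]}$. A finite set $X=\{x_0<\dots<x_{|X|-1}\}$ is $\alpha$-large if $\alpha[x_0][x_1]\cdots[x_{|X|-1}]=0$. *)

theory Defs
  imports Main
begin

text \<open>Ordinal notations below epsilon_0: a notation Os [a0,...,an] denotes the formal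
  sum omega^a0 + ... + omega^an.  Well-formedness (wf_ord) requires a0 >= ... >= an,
  recursively.\<close>

datatype ord = Os "ord list"

fun olt :: "ord \<Rightarrow> ord \<Rightarrow> bool" where
  "olt (Os []) (Os []) = False"
| "olt (Os []) (Os (b # bs)) = True"
| "olt (Os (a # as)) (Os []) = False"
| "olt (Os (a # as)) (Os (b # bs)) = (olt a b \<or> (a = b \<and> olt (Os as) (Os bs)))"

fun wf_ord :: "ord \<Rightarrow> bool" where
  "wf_ord (Os []) = True"
| "wf_ord (Os [a]) = wf_ord a"
| "wf_ord (Os (a # b # bs)) = (wf_ord a \<and> \<not> olt a b \<and> wf_ord (Os (b # bs)))"

definition ozero :: ord where "ozero = Os []"

definition onat :: "nat \<Rightarrow> ord" where "onat k = Os (replicate k (Os []))"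

definition oomega :: ord where "oomega = Os [onat 1]"

definition oomega3 :: ord where "oomega3 = Os [onat 3]"

fun oadd :: "ord \<Rightarrow> ord \<Rightarrow> ord" where
  "oadd (Os as) (Os []) = Os as"
| "oadd (Os as) (Os (b # bs)) = Os (takeWhile (\<lambda>a. \<not> olt a b) as @ b # bs)"

text \<open>Ordinal multiplication on notations:
  alpha * (omega^b0 + ... + omega^bm) = alpha*omega^b0 + ... + alpha*omega^bm, where
  alpha * omega^0 = alpha and alpha * omega^b = omega^(a0 + b) for b > 0, alpha > 0.\<close>
definition omul_pow :: "ord \<Rightarrow> ord \<Rightarrow> ord list" where
  "omul_pow \<alpha> b = (case \<alpha> of Os [] \<Rightarrow> []
      | Os (a # as) \<Rightarrow> (if b = Os [] then a # as else [oadd a b]))"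

fun omul :: "ord \<Rightarrow> ord \<Rightarrow> ord" where
  "omul \<alpha> (Os bs) = Os (concat (map (omul_pow \<alpha>) bs))"

fun mc :: "ord \<Rightarrow> nat" where
  "mc (Os as) = fold max (map (\<lambda>a. max (count_list as a) (mc a)) as) 0"

function fs :: "ord \<Rightarrow> nat \<Rightarrow> ord" where
  "fs (Os as) x =
     (if as = [] then Os []
      else (case last as of
              Os bs \<Rightarrow>
                (if bs = [] then Os (butlast as)
                 else if last bs = Os [] then Os (butlast as @ replicate x (Os (butlast bs)))
                 else Os (butlast as @ [fs (last as) x]))))"
  by pat_completeness auto
termination
  apply (relation "measure (\<lambda>(a, x). size a)")
   apply simp
  apply clarsimp
  subgoal for as xa
    using size_list_estimation'[of "last as" as "size (last as)" size] last_in_set[of as]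
    by simp
  done

definition fs_iter :: "ord \<Rightarrow> nat list \<Rightarrow> ord" where
  "fs_iter \<alpha> xs = foldl fs \<alpha> xs"

definition large :: "ord \<Rightarrow> nat set \<Rightarrow> bool" where
  "large \<alpha> X \<longleftrightarrow> fs_iter \<alpha> (sorted_list_of_set X) = Os []"

definition Phi :: "nat \<Rightarrow> ord \<Rightarrow> ord" where
  "Phi l \<alpha> = oadd (oadd (oadd (omul oomega3 \<alpha>) oomega3) (onat l)) (onat 2)"

definition E :: "nat \<Rightarrow> nat" where
  "E x = 2 ^ (2 ^ (2 ^ x))"

end

theory Submission imports Defs begin

declare fs.simps[simp del]

fun lexlt :: "ord list \<Rightarrow> ord list \<Rightarrow> bool" where
  "lexlt [] [] = False"
| "lexlt [] (b # bs) = True"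
| "lexlt (a # as) [] = False"
| "lexlt (a # as) (b # bs) = (olt a b \<or> (a = b \<and> lexlt as bs))"

lemma olt_Os: "olt (Os xs) (Os ys) = lexlt xs ys"
  by (induction xs ys rule: lexlt.induct) auto

lemma lexlt_Nil2[simp]: "\<not> lexlt xs []"
  by (cases xs) auto

lemma lexlt_Nil1[simp]: "lexlt [] ys = (ys \<noteq> [])"
  by (cases ys) auto

lemma olt_irrefl: "\<not> olt a a"
proof (induction a)
  case (Os as)
  then show ?case
  proof (induction as)
    case Nil then show ?case by simp
  next
    case (Cons a as) then show ?case by (simp add: olt_Os)
  qed
qed

lemma lexlt_trans_aux:
  "(\<And>x b c. x \<in> set as \<Longrightarrow> olt x b \<Longrightarrow> olt b c \<Longrightarrow> olt x c) \<Longrightarrow>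
   lexlt as bs \<Longrightarrow> lexlt bs cs \<Longrightarrow> lexlt as cs"
proof (induction as arbitrary: bs cs)
  case Nil then show ?case by (cases bs; cases cs) auto
next
  case (Cons a as)
  obtain b1 bs1 where b: "bs = b1 # bs1" using Cons.prems(2) by (cases bs) auto
  obtain c1 cs1 where c: "cs = c1 # cs1" using Cons.prems(3) by (cases cs) auto
  have IHa: "\<And>b c. olt a b \<Longrightarrow> olt b c \<Longrightarrow> olt a c" using Cons.prems(1)[of a] by simp
  have IHl: "lexlt as bs1 \<Longrightarrow> lexlt bs1 cs1 \<Longrightarrow> lexlt as cs1"
    using Cons.IH[of bs1 cs1] Cons.prems(1) by simp
  have 1: "olt a b1 \<or> (a = b1 \<and> lexlt as bs1)" using Cons.prems(2) b by simp
  have 2: "olt b1 c1 \<or> (b1 = c1 \<and> lexlt bs1 cs1)" using Cons.prems(3) b c by simp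
  have "olt a c1 \<or> (a = c1 \<and> lexlt as cs1)" using 1 2 IHa IHl by blast
  then show ?case using c by simp
qed

lemma olt_trans: "olt a b \<Longrightarrow> olt b c \<Longrightarrow> olt a c"
proof (induction a arbitrary: b c)
  case (Os as)
  obtain bs where b: "b = Os bs" by (cases b) auto
  obtain cs where c: "c = Os cs" by (cases c) auto
  show ?case using lexlt_trans_aux[of as bs cs] Os b c by (simp add: olt_Os)
qed

lemma lexlt_total_aux:
  "(\<And>x b. x \<in> set as \<Longrightarrow> olt x b \<or> x = b \<or> olt b x) \<Longrightarrow>
   lexlt as bs \<or> as = bs \<or> lexlt bs as"
proof (induction as arbitrary: bs)
  case Nil then show ?case by (cases bs) auto
next
  case (Cons a as)
  show ?case
  proof (cases bs)
    case Nil then show ?thesis by simp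
  next
    case (Cons b1 bs1)
    have 1: "olt a b1 \<or> a = b1 \<or> olt b1 a" using Cons.prems(1)[of a] by simp
    have 2: "lexlt as bs1 \<or> as = bs1 \<or> lexlt bs1 as"
      using Cons.IH[of bs1] Cons.prems(1) by simp
    show ?thesis using 1 2 \<open>bs = b1 # bs1\<close> by auto
  qed
qed

lemma olt_total: "olt a b \<or> a = b \<or> olt b a"
proof (induction a arbitrary: b)
  case (Os as)
  obtain bs where b: "b = Os bs" by (cases b) auto
  show ?case using lexlt_total_aux[of as bs] Os b by (auto simp add: olt_Os)
qed

lemma olt_asym: "olt a b \<Longrightarrow> \<not> olt b a"
  using olt_trans olt_irrefl by blast


lemma nle_trans: "\<not> olt a b \<Longrightarrow> \<not> olt b c \<Longrightarrow> \<not> olt a c"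
  using olt_total olt_trans by blast

lemma wf_Os: "wf_ord (Os as) \<longleftrightarrow> (\<forall>a\<in>set as. wf_ord a) \<and> sorted_wrt (\<lambda>a b. \<not> olt a b) as"
proof (induction as rule: induct_list012)
  case 1 then show ?case by simp
next
  case (2 x) then show ?case by simp
next
  case (3 x y zs)
  then show ?case using nle_trans by auto
qed

lemma lexlt_append_same[simp]: "lexlt (p @ xs) (p @ ys) = lexlt xs ys"
  by (induction p) (auto simp: olt_irrefl)

lemma fs_nil[simp]: "fs (Os []) x = Os []"
  by (subst fs.simps) simp

lemma fs_zero: "fs (Os (as @ [Os []])) x = Os as"
  by (subst fs.simps) simp

lemma fs_succ: "fs (Os (as @ [Os (cs @ [Os []])])) x = Os (as @ replicate x (Os cs))"
  by (subst fs.simps) simp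

lemma fs_lim: "cs \<noteq> [] \<Longrightarrow> last cs \<noteq> Os [] \<Longrightarrow> fs (Os (as @ [Os cs])) x = Os (as @ [fs (Os cs) x])"
  by (subst fs.simps) simp

lemma ord_cases3:
  assumes "as \<noteq> []"
  obtains (zero) as0 where "as = as0 @ [Os []]"
  | (succ) as0 cs0 where "as = as0 @ [Os (cs0 @ [Os []])]"
  | (lim) as0 cs where "as = as0 @ [Os cs]" "cs \<noteq> []" "last cs \<noteq> Os []"
proof -
  obtain as0 a where A: "as = as0 @ [a]" using assms by (metis rev_exhaust)
  obtain cs where a: "a = Os cs" by (cases a) auto
  show ?thesis
  proof (cases "cs = []")
    case True then show ?thesis using zero A a by simp
  next
    case False
    then obtain cs0 c where "cs = cs0 @ [c]" by (metis rev_exhaust)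
    then show ?thesis using succ lim A a False by (cases "c = Os []") auto
  qed
qed

lemma fold_max_le: "fold max xs m \<le> (M::nat) \<longleftrightarrow> m \<le> M \<and> (\<forall>x\<in>set xs. x \<le> M)"
  by (induction xs arbitrary: m) auto

lemma mc_le: "mc (Os as) \<le> M \<longleftrightarrow> (\<forall>a\<in>set as. count_list as a \<le> M \<and> mc a \<le> M)"
  by (simp add: fold_max_le)

declare mc.simps[simp del]

lemma mc_ge: "a \<in> set as \<Longrightarrow> count_list as a \<le> mc (Os as) \<and> mc a \<le> mc (Os as)"
  using mc_le[of as "mc (Os as)"] by blast

lemma lexlt_prefix[simp]: "lexlt xs (xs @ ys) = (ys \<noteq> [])"
  by (induction xs) (auto simp: olt_irrefl)

lemma olt_snoc0: "olt (Os cs) (Os (cs @ [Os []]))"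
  by (simp add: olt_Os)

lemma count_list_replicate_same[simp]: "count_list (replicate n a) a = n"
  by (induction n) auto

lemma count_list_pos: "a \<in> set as \<Longrightarrow> 0 < count_list as a"
  by (induction as) auto

lemma sorted_wrt_replicate: "P a a \<Longrightarrow> sorted_wrt P (replicate n a)"
  by (induction n) auto

lemma fs_less: "\<alpha> \<noteq> Os [] \<Longrightarrow> olt (fs \<alpha> x) \<alpha>"
proof (induction \<alpha>)
  case (Os as)
  then have "as \<noteq> []" by simp
  then show ?case
  proof (cases rule: ord_cases3)
    case (zero as0) then show ?thesis by (simp add: fs_zero olt_Os)
  next
    case (succ as0 cs0)
    have "olt (Os cs0) (Os (cs0 @ [Os []]))" 
      using lexlt_append_same[of cs0 "[]" "[Os []]"] by (simp add: olt_Os)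
    then show ?thesis using succ by (cases x) (auto simp: fs_succ olt_Os)
  next
    case (lim as0 cs)
    have "olt (fs (Os cs) x) (Os cs)" using Os.IH lim by simp
    then show ?thesis using lim by (simp add: fs_lim olt_Os)
  qed
qed



lemma wf_append_intro: "wf_ord (Os as) \<Longrightarrow> wf_ord (Os bs) \<Longrightarrow> (\<forall>a\<in>set as. \<forall>b\<in>set bs. \<not> olt a b) \<Longrightarrow> wf_ord (Os (as @ bs))"
  unfolding wf_Os by (auto simp add: sorted_wrt_append)

lemma wf_append_D: "wf_ord (Os (as @ bs)) \<Longrightarrow> wf_ord (Os as) \<and> wf_ord (Os bs) \<and> (\<forall>a\<in>set as. \<forall>b\<in>set bs. \<not> olt a b)"
  unfolding wf_Os by (auto simp add: sorted_wrt_append)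

lemma wf_elem: "wf_ord (Os as) \<Longrightarrow> a \<in> set as \<Longrightarrow> wf_ord a"
  unfolding wf_Os by auto

lemma wf_rep: "wf_ord d \<Longrightarrow> wf_ord (Os (replicate n d))"
  unfolding wf_Os by (auto intro: sorted_wrt_replicate simp: olt_irrefl)

lemma wf_single: "wf_ord d \<Longrightarrow> wf_ord (Os [d])"
  by simp

lemma fs_wf: "wf_ord \<beta> \<Longrightarrow> wf_ord (fs \<beta> x)"
proof (induction \<beta>)
  case (Os as)
  show ?case
  proof (cases "as = []")
    case True then show ?thesis by simp
  next
    case False
    then show ?thesis
    proof (cases rule: ord_cases3)
      case (zero as0) then show ?thesis using Os.prems wf_append_D[of as0 "[Os []]"] by (simp add: fs_zero)
    next
      case (succ as0 cs0)
      have D: "wf_ord (Os as0) \<and> wf_ord (Os [Os (cs0 @ [Os []])]) \<and> (\<forall>a\<in>set as0. \<not> olt a (Os (cs0 @ [Os []])))"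
        using wf_append_D[of as0 "[Os (cs0 @ [Os []])]"] Os.prems succ by simp
      then have "wf_ord (Os (cs0 @ [Os []]))" using wf_elem[of "[Os (cs0 @ [Os []])]"] by simp
      then have wd: "wf_ord (Os cs0)" using wf_append_D[of cs0 "[Os []]"] by blast
      have "\<forall>a\<in>set as0. \<not> olt a (Os cs0)"
      proof
        fix a assume "a \<in> set as0"
        then have "\<not> olt a (Os (cs0 @ [Os []]))" using D by blast
        then show "\<not> olt a (Os cs0)" using olt_snoc0 olt_trans by blast
      qed
      then have "wf_ord (Os (as0 @ replicate x (Os cs0)))"
        using wf_append_intro[of as0 "replicate x (Os cs0)"] D wf_rep[OF wd] by simp
      then show ?thesis using succ by (simp add: fs_succ)
    next
      case (lim as0 cs)
      have D: "wf_ord (Os as0) \<and> wf_ord (Os [Os cs]) \<and> (\<forall>a\<in>set as0. \<not> olt a (Os cs))"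
        using wf_append_D[of as0 "[Os cs]"] Os.prems lim by simp
      have wa: "wf_ord (Os cs)" using D wf_elem[of "[Os cs]"] by simp
      have IH: "wf_ord (fs (Os cs) x)" using Os.IH lim wa by simp
      have lt: "olt (fs (Os cs) x) (Os cs)" using fs_less lim by simp
      have "\<forall>a\<in>set as0. \<not> olt a (fs (Os cs) x)"
      proof
        fix a assume "a \<in> set as0"
        then have "\<not> olt a (Os cs)" using D by blast
        then show "\<not> olt a (fs (Os cs) x)" using lt olt_total olt_trans by blast
      qed
      then have "wf_ord (Os (as0 @ [fs (Os cs) x]))"
        using wf_append_intro[of as0 "[fs (Os cs) x]"] D IH by simp
      then show ?thesis using lim by (simp add: fs_lim)
    qed
  qed
qed

lemma mc_snoc0: "mc (Os cs) \<le> mc (Os (cs @ [Os []]))"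
proof -
  have "\<forall>a\<in>set cs. count_list cs a \<le> mc (Os (cs @ [Os []])) \<and> mc a \<le> mc (Os (cs @ [Os []]))"
  proof
    fix a assume a: "a \<in> set cs"
    have "count_list cs a \<le> count_list (cs @ [Os []]) a" by simp
    then show "count_list cs a \<le> mc (Os (cs @ [Os []])) \<and> mc a \<le> mc (Os (cs @ [Os []]))"
      using mc_ge[of a "cs @ [Os []]"] a by auto
  qed
  then show ?thesis using mc_le by blast
qed

lemma mc_pos: "as \<noteq> [] \<Longrightarrow> 1 \<le> mc (Os as)"
proof -
  assume "as \<noteq> []"
  then obtain a where "a \<in> set as" by (cases as) auto
  then have "1 \<le> count_list as a" using count_list_pos by (simp add: Suc_le_eq)
  then show ?thesis using mc_ge[OF \<open>a \<in> set as\<close>] by linarith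
qed

lemma fs_mc: "wf_ord \<beta> \<Longrightarrow> mc (fs \<beta> x) \<le> max (mc \<beta>) x"
proof (induction \<beta>)
  case (Os as)
  show ?case
  proof (cases "as = []")
    case True then show ?thesis by simp
  next
    case False
    then show ?thesis
    proof (cases rule: ord_cases3)
      case (zero as0)
      have "\<forall>a\<in>set as0. count_list as0 a \<le> max (mc (Os as)) x \<and> mc a \<le> max (mc (Os as)) x"
      proof
        fix a assume a: "a \<in> set as0"
        then have "count_list as0 a \<le> count_list as a" using zero by simp
        then show "count_list as0 a \<le> max (mc (Os as)) x \<and> mc a \<le> max (mc (Os as)) x"
          using mc_ge[of a as] a zero by auto
      qed
      then show ?thesis using zero by (simp only: fs_zero mc_le)
    next
      case (succ as0 cs0)
      let ?a = "Os (cs0 @ [Os []])"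
      have notin: "Os cs0 \<notin> set as0"
      proof
        assume "Os cs0 \<in> set as0"
        then have "\<not> olt (Os cs0) ?a" using Os.prems succ wf_append_D[of as0 "[?a]"] by simp
        then show False using olt_snoc0 by blast
      qed
      have mca: "mc (Os cs0) \<le> mc (Os as)" using mc_snoc0[of cs0] mc_ge[of ?a as] succ by force
      have "\<forall>a\<in>set (as0 @ replicate x (Os cs0)). count_list (as0 @ replicate x (Os cs0)) a \<le> max (mc (Os as)) x \<and> mc a \<le> max (mc (Os as)) x"
      proof
        fix a assume a: "a \<in> set (as0 @ replicate x (Os cs0))"
        show "count_list (as0 @ replicate x (Os cs0)) a \<le> max (mc (Os as)) x \<and> mc a \<le> max (mc (Os as)) x"
        proof (cases "a = Os cs0")
          case True
          then have "count_list (as0 @ replicate x (Os cs0)) a = x" using notin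
            by (simp add: count_list_0_iff)
          then show ?thesis using True mca by simp
        next
          case False
          then have a0: "a \<in> set as0" using a by auto
          have "count_list (as0 @ replicate x (Os cs0)) a = count_list as0 a" using False by simp
          also have "\<dots> \<le> count_list as a" using succ by simp
          finally show ?thesis using mc_ge[of a as] a0 succ by auto
        qed
      qed
      then show ?thesis using succ by (simp only: fs_succ mc_le)
    next
      case (lim as0 cs)
      let ?f = "fs (Os cs) x"
      have D: "wf_ord (Os as0) \<and> wf_ord (Os [Os cs]) \<and> (\<forall>a\<in>set as0. \<not> olt a (Os cs))"
        using wf_append_D[of as0 "[Os cs]"] Os.prems lim by simp
      have wa: "wf_ord (Os cs)" using D wf_elem[of "[Os cs]"] by simp
      have IH: "mc ?f \<le> max (mc (Os cs)) x" using Os.IH lim wa by simp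
      have lt: "olt ?f (Os cs)" using fs_less lim by simp
      have notin: "?f \<notin> set as0"
      proof
        assume "?f \<in> set as0"
        then have "\<not> olt ?f (Os cs)" using D by blast
        then show False using lt by blast
      qed
      have mca: "mc (Os cs) \<le> mc (Os as)" using mc_ge[of "Os cs" as] lim by force
      have one: "1 \<le> mc (Os as)" using mc_pos False by blast
      have "\<forall>a\<in>set (as0 @ [?f]). count_list (as0 @ [?f]) a \<le> max (mc (Os as)) x \<and> mc a \<le> max (mc (Os as)) x"
      proof
        fix a assume a: "a \<in> set (as0 @ [?f])"
        show "count_list (as0 @ [?f]) a \<le> max (mc (Os as)) x \<and> mc a \<le> max (mc (Os as)) x"
        proof (cases "a = ?f")
          case True
          then have "count_list (as0 @ [?f]) a = 1" using notin
            by (simp add: count_list_0_iff)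
          then show ?thesis using True mca IH one by (auto simp: max_def split: if_splits)
        next
          case False
          then have a0: "a \<in> set as0" using a by auto
          have "count_list (as0 @ [?f]) a = count_list as0 a" using False by simp
          also have "\<dots> \<le> count_list as a" using lim by simp
          finally show ?thesis using mc_ge[of a as] a0 lim by auto
        qed
      qed
      moreover have "fs (Os as) x = Os (as0 @ [?f])" using lim fs_lim by simp
      ultimately show ?thesis using mc_le[of "as0 @ [?f]"] by simp
    qed
  qed
qed


lemma lexlt_split: "lexlt bs (p @ r) \<Longrightarrow> lexlt bs p \<or> (\<exists>rest. bs = p @ rest \<and> lexlt rest r)"
proof (induction p arbitrary: bs)
  case Nil then show ?case by simp
next
  case (Cons a p)
  show ?case
  proof (cases bs)
    case Nil then show ?thesis by simp
  next
    case (Cons b bs')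
    then have "olt b a \<or> (b = a \<and> lexlt bs' (p @ r))" using Cons.prems by simp
    then show ?thesis using Cons.IH[of bs'] \<open>bs = b # bs'\<close> by auto
  qed
qed

lemma lexlt_append_right: "lexlt bs p \<Longrightarrow> lexlt bs (p @ r)"
proof (induction p arbitrary: bs)
  case Nil then show ?case by simp
next
  case (Cons a p)
  then show ?case by (cases bs) auto
qed

lemma olt_Nil[simp]: "\<not> olt \<beta> (Os [])"
  by (cases \<beta>) (simp add: olt_Os)

lemma lexlt_single: "lexlt rest [a] \<longleftrightarrow> rest = [] \<or> (\<exists>b bs'. rest = b # bs' \<and> olt b a)"
  by (cases rest) auto

lemma count_list_le_mc: "count_list bs d \<le> mc (Os bs)"
proof (cases "d \<in> set bs")
  case True then show ?thesis using mc_ge by blast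
next
  case False then show ?thesis by (simp add: count_list_0_iff)
qed

lemma rep_lemma: "wf_ord (Os (b # bs')) \<Longrightarrow> (b = d \<or> olt b d) \<Longrightarrow> count_list (b # bs') d < x
  \<Longrightarrow> lexlt (b # bs') (replicate x d)"
proof (induction x arbitrary: b bs')
  case 0 then show ?case by simp
next
  case (Suc x)
  show ?case
  proof (cases "b = d")
    case False then show ?thesis using Suc.prems by simp
  next
    case True
    show ?thesis
    proof (cases bs')
      case Nil then show ?thesis using Suc.prems True by (cases x) auto
    next
      case (Cons b' bs'')
      have D: "wf_ord (Os [b]) \<and> wf_ord (Os (b' # bs'')) \<and> \<not> olt b b'"
        using wf_append_D[of "[b]" "b' # bs''"] Suc.prems(1) Cons by simp
      then have "b' = d \<or> olt b' d" using True olt_total by blast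
      moreover have "count_list (b' # bs'') d < x" using Suc.prems(3) True Cons by simp
      ultimately have "lexlt (b' # bs'') (replicate x d)" using Suc.IH D by blast
      then show ?thesis using True Cons by simp
    qed
  qed
qed

lemma bachmann: "wf_ord \<beta> \<Longrightarrow> olt \<beta> \<alpha> \<Longrightarrow> mc \<beta> < x \<Longrightarrow>
  olt \<beta> (fs \<alpha> x) \<or> (\<beta> = fs \<alpha> x \<and> (\<exists>as0. \<alpha> = Os (as0 @ [Os []])))"
proof (induction \<alpha> arbitrary: \<beta>)
  case (Os as)
  obtain bs where b: "\<beta> = Os bs" by (cases \<beta>) auto
  have ne: "as \<noteq> []" using Os.prems(2) by auto
  have lt: "lexlt bs as" using Os.prems(2) b by (simp add: olt_Os)
  show ?case using ne
  proof (cases rule: ord_cases3)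
    case (zero as0)
    from lexlt_split[of bs as0 "[Os []]"] lt zero
    have "lexlt bs as0 \<or> bs = as0" by (auto simp: lexlt_single)
    then show ?thesis using zero b by (auto simp: fs_zero olt_Os)
  next
    case (succ as0 cs0)
    let ?d = "Os cs0"
    have eq: "fs (Os as) x = Os (as0 @ replicate x ?d)" using succ fs_succ by simp
    from lexlt_split[of bs as0 "[Os (cs0 @ [Os []])]"] lt succ
    have "lexlt bs as0 \<or> (\<exists>rest. bs = as0 @ rest \<and> lexlt rest [Os (cs0 @ [Os []])])" by simp
    then have "lexlt bs (as0 @ replicate x ?d)"
    proof
      assume "lexlt bs as0" then show ?thesis by (rule lexlt_append_right)
    next
      assume "\<exists>rest. bs = as0 @ rest \<and> lexlt rest [Os (cs0 @ [Os []])]"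
      then obtain rest where r: "bs = as0 @ rest" "lexlt rest [Os (cs0 @ [Os []])]" by blast
      show ?thesis
      proof (cases rest)
        case Nil
        have "x \<noteq> 0" using Os.prems(3) by simp
        then show ?thesis using r Nil by simp
      next
        case (Cons b1 bs1)
        then have "olt b1 (Os (cs0 @ [Os []]))" using r by simp
        moreover obtain cb where cb: "b1 = Os cb" by (cases b1) auto
        ultimately have "lexlt cb (cs0 @ [Os []])" by (simp add: olt_Os)
        from lexlt_split[OF this] have "b1 = ?d \<or> olt b1 ?d"
          using cb by (auto simp: lexlt_single olt_Os)
        moreover have "wf_ord (Os (b1 # bs1))" using Os.prems(1) b r Cons wf_append_D by blast
        moreover have "count_list (b1 # bs1) ?d < x"
        proof -
          have "count_list (b1 # bs1) ?d \<le> count_list bs ?d" using r Cons by simp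
          also have "\<dots> \<le> mc \<beta>" using b count_list_le_mc by simp
          finally show ?thesis using Os.prems(3) by simp
        qed
        ultimately have "lexlt (b1 # bs1) (replicate x ?d)" using rep_lemma by blast
        then show ?thesis using r Cons by simp
      qed
    qed
    then show ?thesis using eq b by (simp add: olt_Os)
  next
    case (lim as0 cs)
    let ?f = "fs (Os cs) x"
    have eq: "fs (Os as) x = Os (as0 @ [?f])" using lim fs_lim by simp
    from lexlt_split[of bs as0 "[Os cs]"] lt lim
    have "lexlt bs as0 \<or> (\<exists>rest. bs = as0 @ rest \<and> lexlt rest [Os cs])" by simp
    then have "lexlt bs (as0 @ [?f])"
    proof
      assume "lexlt bs as0" then show ?thesis by (rule lexlt_append_right)
    next
      assume "\<exists>rest. bs = as0 @ rest \<and> lexlt rest [Os cs]"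
      then obtain rest where r: "bs = as0 @ rest" "lexlt rest [Os cs]" by blast
      show ?thesis
      proof (cases rest)
        case Nil
        then show ?thesis using r by simp
      next
        case (Cons b1 bs1)
        then have o: "olt b1 (Os cs)" using r by simp
        have wb: "wf_ord b1" using Os.prems(1) b r Cons wf_elem by auto
        have "mc b1 \<le> mc \<beta>" using b r Cons mc_ge[of b1 bs] by simp
        then have m: "mc b1 < x" using Os.prems(3) by simp
        have "olt b1 ?f \<or> (b1 = ?f \<and> (\<exists>as0. Os cs = Os (as0 @ [Os []])))"
          using Os.IH[of "Os cs" b1] lim wb o m by simp
        moreover have "\<not> (\<exists>as0. Os cs = Os (as0 @ [Os []]))" using lim by auto
        ultimately have "olt b1 ?f" by blast
        then show ?thesis using r Cons by simp
      qed
    qed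
    then show ?thesis using eq b by (simp add: olt_Os)
  qed
qed

lemma foldl_fs_zero[simp]: "foldl fs (Os []) zs = Os []"
  by (induction zs) auto

lemma large_mono: "sorted_wrt (<) zs \<Longrightarrow> \<forall>z\<in>set zs. mc \<beta> < z \<Longrightarrow> wf_ord \<beta> \<Longrightarrow> (\<beta> = \<alpha> \<or> olt \<beta> \<alpha>)
  \<Longrightarrow> foldl fs \<alpha> zs = Os [] \<Longrightarrow> foldl fs \<beta> zs = Os []"
proof (induction zs arbitrary: \<alpha> \<beta>)
  case Nil then show ?case by auto
next
  case (Cons z zs)
  show ?case
  proof (cases "\<beta> = \<alpha>")
    case True then show ?thesis using Cons.prems by simp
  next
    case False
    then have o: "olt \<beta> \<alpha>" using Cons.prems(4) by simp
    have mz: "mc \<beta> < z" using Cons.prems(2) by simp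
    have le: "\<beta> = fs \<alpha> z \<or> olt \<beta> (fs \<alpha> z)" using bachmann[OF Cons.prems(3) o mz] by blast
    show ?thesis
    proof (cases "\<beta> = Os []")
      case True then show ?thesis by simp
    next
      case False
      then have "olt (fs \<beta> z) \<beta>" by (rule fs_less)
      then have o2: "olt (fs \<beta> z) (fs \<alpha> z)" using le olt_trans by blast
      have w2: "wf_ord (fs \<beta> z)" using fs_wf Cons.prems(3) by blast
      have m2: "mc (fs \<beta> z) \<le> max (mc \<beta>) z" using fs_mc Cons.prems(3) by blast
      have "\<forall>z'\<in>set zs. mc (fs \<beta> z) < z'"
      proof
        fix z' assume "z' \<in> set zs"
        then have "z < z'" "mc \<beta> < z'" using Cons.prems(1,2) by auto
        then show "mc (fs \<beta> z) < z'" using m2 by simp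
      qed
      moreover have "sorted_wrt (<) zs" using Cons.prems(1) by simp
      moreover have "foldl fs (fs \<alpha> z) zs = Os []" using Cons.prems(5) by simp
      ultimately have "foldl fs (fs \<beta> z) zs = Os []" using Cons.IH w2 o2 by blast
      then show ?thesis by simp
    qed
  qed
qed


lemma drop_ge: "sorted_wrt (<) zs \<Longrightarrow> \<forall>w\<in>set zs. e \<le> w \<Longrightarrow> \<forall>w\<in>set (drop t zs). e + t \<le> (w::nat)"
proof (induction zs arbitrary: e t)
  case Nil then show ?case by simp
next
  case (Cons z zs)
  show ?case
  proof (cases t)
    case 0 then show ?thesis using Cons.prems by simp
  next
    case (Suc t')
    have h: "\<forall>w\<in>set zs. Suc e \<le> w" using Cons.prems by auto
    have "\<forall>w\<in>set (drop t' zs). Suc e + t' \<le> w" using Cons.IH[OF _ h] Cons.prems(1) by simp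
    then show ?thesis using Suc by simp
  qed
qed

lemma c_phase: "P \<noteq> [] \<Longrightarrow> foldl fs (Os (P @ replicate c (Os []))) zs = Os []
  \<Longrightarrow> c \<le> length zs \<and> foldl fs (Os P) (drop c zs) = Os []"
proof (induction c arbitrary: zs)
  case 0 then show ?case by simp
next
  case (Suc c)
  obtain z zs1 where zs: "zs = z # zs1" using Suc.prems by (cases zs) auto
  have "fs (Os (P @ replicate (Suc c) (Os []))) z = Os (P @ replicate c (Os []))"
    using fs_zero[of "P @ replicate c (Os [])"] by (simp add: replicate_append_same[symmetric])
  then have "foldl fs (Os (P @ replicate c (Os []))) zs1 = Os []" using Suc.prems zs by simp
  then show ?case using Suc.IH[of zs1] Suc.prems zs by simp
qed

lemma b_phase: "P \<noteq> [] \<Longrightarrow> sorted_wrt (<) zs \<Longrightarrow> \<forall>z\<in>set zs. e \<le> z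
  \<Longrightarrow> foldl fs (Os (P @ replicate b (Os [Os []]))) zs = Os []
  \<Longrightarrow> \<exists>t. foldl fs (Os P) (drop t zs) = Os [] \<and> (\<forall>z\<in>set (drop t zs). 2^b * e \<le> z)"
proof (induction b arbitrary: zs e)
  case 0 then show ?case by (intro exI[of _ 0]) simp
next
  case (Suc b)
  obtain z zs1 where zs: "zs = z # zs1" using Suc.prems by (cases zs) auto
  have "fs (Os (P @ replicate (Suc b) (Os [Os []]))) z = Os ((P @ replicate b (Os [Os []])) @ replicate z (Os []))"
    using fs_succ[of "P @ replicate b (Os [Os []])" "[]"] by (simp add: replicate_append_same[symmetric])
  then have "foldl fs (Os ((P @ replicate b (Os [Os []])) @ replicate z (Os []))) zs1 = Os []"
    using Suc.prems zs by simp
  from c_phase[OF _ this] Suc.prems(1)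
  have c: "foldl fs (Os (P @ replicate b (Os [Os []]))) (drop z zs1) = Os []" by simp
  have s1: "sorted_wrt (<) zs1" using Suc.prems(2) zs by simp
  have g1: "\<forall>w\<in>set zs1. Suc z \<le> w" using Suc.prems(2) zs by auto
  have "\<forall>w\<in>set (drop z zs1). Suc z + z \<le> w" using drop_ge[OF s1 g1] by blast
  moreover have "e \<le> z" using Suc.prems(3) zs by simp
  ultimately have g2: "\<forall>w\<in>set (drop z zs1). 2 * e \<le> w" by auto
  obtain t where t: "foldl fs (Os P) (drop t (drop z zs1)) = Os []"
      "\<forall>w\<in>set (drop t (drop z zs1)). 2^b * (2 * e) \<le> w"
    using Suc.IH[OF Suc.prems(1) _ g2 c] s1 by auto
  show ?case
    apply (intro exI[of _ "Suc (z + t)"])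
    using t zs by (simp add: add.commute mult.assoc mult.left_commute)
qed

lemma a_step: "2 \<le> a \<Longrightarrow> sorted_wrt (<) zs \<Longrightarrow> \<forall>z\<in>set zs. e \<le> z
  \<Longrightarrow> foldl fs (Os (Q @ replicate a (Os [Os [], Os []]))) zs = Os []
  \<Longrightarrow> \<exists>t. foldl fs (Os (Q @ replicate (a - 1) (Os [Os [], Os []]))) (drop t zs) = Os [] \<and> (\<forall>z\<in>set (drop t zs). 2^e \<le> z)"
proof -
  assume a: "2 \<le> a" and s: "sorted_wrt (<) zs" and g: "\<forall>z\<in>set zs. e \<le> z"
    and f: "foldl fs (Os (Q @ replicate a (Os [Os [], Os []]))) zs = Os []"
  obtain z zs1 where zs: "zs = z # zs1" using f a by (cases zs) auto
  have ra: "replicate a (Os [Os [], Os []]) = replicate (a - 1) (Os [Os [], Os []]) @ [Os ([Os []] @ [Os []])]"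
  proof -
    obtain a' where "a = Suc a'" using a by (cases a) auto
    then show ?thesis by (simp add: replicate_append_same)
  qed
  have "fs (Os (Q @ replicate a (Os [Os [], Os []]))) z = Os ((Q @ replicate (a - 1) (Os [Os [], Os []])) @ replicate z (Os [Os []]))"
    using fs_succ[of "Q @ replicate (a - 1) (Os [Os [], Os []])" "[Os []]" z] ra by simp
  then have f1: "foldl fs (Os ((Q @ replicate (a - 1) (Os [Os [], Os []])) @ replicate z (Os [Os []]))) zs1 = Os []"
    using f zs by simp
  have ne: "Q @ replicate (a - 1) (Os [Os [], Os []]) \<noteq> []" using a by simp
  have s1: "sorted_wrt (<) zs1" using s zs by simp
  have g1: "\<forall>w\<in>set zs1. Suc z \<le> w" using s zs by auto
  obtain t where t: "foldl fs (Os (Q @ replicate (a - 1) (Os [Os [], Os []]))) (drop t zs1) = Os []"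
      "\<forall>w\<in>set (drop t zs1). 2^z * Suc z \<le> w"
    using b_phase[OF ne s1 g1 f1] by blast
  have ez: "e \<le> z" using g zs by simp
  have "(2::nat)^e \<le> 2^z * Suc z"
  proof -
    have "(2::nat)^e \<le> 2^z" using ez by (simp add: power_increasing)
    also have "\<dots> \<le> 2^z * Suc z" by simp
    finally show ?thesis .
  qed
  then show ?thesis using t zs by (intro exI[of _ "Suc t"]) force
qed

lemma a_three: "4 \<le> a \<Longrightarrow> sorted_wrt (<) zs \<Longrightarrow> \<forall>z\<in>set zs. e \<le> z
  \<Longrightarrow> foldl fs (Os (Q @ replicate a (Os [Os [], Os []]))) zs = Os []
  \<Longrightarrow> \<exists>t. foldl fs (Os (Q @ replicate (a - 3) (Os [Os [], Os []]))) (drop t zs) = Os [] \<and> (\<forall>z\<in>set (drop t zs). 2^2^2^e \<le> z)"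
proof -
  assume a: "4 \<le> a" and s: "sorted_wrt (<) zs" and g: "\<forall>z\<in>set zs. e \<le> z"
    and f: "foldl fs (Os (Q @ replicate a (Os [Os [], Os []]))) zs = Os []"
  have "\<exists>t. foldl fs (Os (Q @ replicate (a - 1) (Os [Os [], Os []]))) (drop t zs) = Os [] \<and> (\<forall>z\<in>set (drop t zs). 2^e \<le> z)"
    by (rule a_step) (use a s g f in auto)
  then obtain t1 where t1: "foldl fs (Os (Q @ replicate (a - 1) (Os [Os [], Os []]))) (drop t1 zs) = Os []"
     "\<forall>z\<in>set (drop t1 zs). 2^e \<le> z" by blast
  have "\<exists>t. foldl fs (Os (Q @ replicate (a - 1 - 1) (Os [Os [], Os []]))) (drop t (drop t1 zs)) = Os [] \<and> (\<forall>z\<in>set (drop t (drop t1 zs)). 2^2^e \<le> z)"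
    by (rule a_step) (use a s t1 in auto)
  then obtain t2 where t2: "foldl fs (Os (Q @ replicate (a - 1 - 1) (Os [Os [], Os []]))) (drop t2 (drop t1 zs)) = Os []"
     "\<forall>z\<in>set (drop t2 (drop t1 zs)). 2^2^e \<le> z" by blast
  have "\<exists>t. foldl fs (Os (Q @ replicate (a - 1 - 1 - 1) (Os [Os [], Os []]))) (drop t (drop t2 (drop t1 zs))) = Os [] \<and> (\<forall>z\<in>set (drop t (drop t2 (drop t1 zs))). 2^2^2^e \<le> z)"
    by (rule a_step) (use a s t2 in auto)
  then obtain t3 where t3: "foldl fs (Os (Q @ replicate (a - 1 - 1 - 1) (Os [Os [], Os []]))) (drop t3 (drop t2 (drop t1 zs))) = Os []"
     "\<forall>z\<in>set (drop t3 (drop t2 (drop t1 zs))). 2^2^2^e \<le> z" by blast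
  have "a - 1 - 1 - 1 = a - 3" by simp
  then show ?thesis using t3 by (intro exI[of _ "t1 + t2 + t3"]) (simp add: add.commute add.left_commute)
qed


definition hh :: "ord \<Rightarrow> ord" where "hh c = oadd (Os [Os [], Os [], Os []]) c"

lemma onat_eq: "onat n = Os (replicate n (Os []))" by (simp add: onat_def)

lemma onat3: "onat 3 = Os [Os [], Os [], Os []]" by (simp add: onat_def numeral_eq_Suc)

lemma hh_nil[simp]: "hh (Os []) = Os [Os [], Os [], Os []]" by (simp add: hh_def)

lemma hh_zero: "hh (Os (Os [] # bs)) = Os (Os [] # Os [] # Os [] # Os [] # bs)"
  by (simp add: hh_def olt_irrefl)

lemma olt_Nil1: "y \<noteq> Os [] \<Longrightarrow> olt (Os []) y"
  by (cases y rule: ord.exhaust) (auto simp: olt_Os)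

lemma hh_pos: "b \<noteq> Os [] \<Longrightarrow> hh (Os (b # bs)) = Os (b # bs)"
  using olt_Nil1[of b] by (simp add: hh_def)

lemma omul3: "omul oomega3 (Os cs) = Os (map hh cs)"
proof -
  have "\<And>c. omul_pow oomega3 c = [hh c]"
    by (simp add: omul_pow_def oomega3_def onat3 hh_def)
  then show ?thesis by (induction cs) auto
qed

lemma hh_ne0: "hh c \<noteq> Os []"
  by (cases c rule: ord.exhaust; rename_tac cs; case_tac cs; case_tac "hd cs = Os []")
     (auto simp: hh_zero hh_pos)

lemma hh_ge3: "\<not> olt (hh c) (Os [Os [], Os [], Os []])"
proof (cases c rule: ord.exhaust)
  case (Os cs)
  then show ?thesis
  proof (cases cs)
    case Nil then show ?thesis using Os by (simp add: olt_irrefl)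
  next
    case (Cons b bs)
    then show ?thesis using Os
      by (cases "b = Os []") (auto simp: hh_zero hh_pos olt_Os)
  qed
qed

lemma hh_gt3: "c \<noteq> Os [] \<Longrightarrow> olt (Os [Os [], Os [], Os []]) (hh c)"
proof (cases c rule: ord.exhaust)
  case (Os cs)
  assume "c \<noteq> Os []"
  then obtain b bs where "cs = b # bs" using Os by (cases cs) auto
  then show ?thesis using Os olt_Nil1[of b]
    by (cases "b = Os []") (auto simp: hh_zero hh_pos olt_Os)
qed

lemma hh_mono: "olt c c' \<Longrightarrow> olt (hh c) (hh c')"
proof -
  assume o: "olt c c'"
  obtain cs cs' where c: "c = Os cs" and c': "c' = Os cs'" by (cases c, cases c') auto
  show ?thesis
  proof (cases cs)
    case Nil
    then have "c' \<noteq> Os []" using o c by auto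
    then show ?thesis using hh_gt3 c Nil by simp
  next
    case (Cons a as)
    then obtain b bs where cs': "cs' = b # bs" using o c c' by (cases cs') (auto simp: olt_Os)
    have l: "olt a b \<or> (a = b \<and> lexlt as bs)" using o c c' Cons cs' by (simp add: olt_Os)
    show ?thesis
    proof (cases "a = Os []")
      case True
      show ?thesis
      proof (cases "b = Os []")
        case True
        then show ?thesis using l \<open>a = Os []\<close> c c' Cons cs' by (simp add: hh_zero olt_Os olt_irrefl)
      next
        case False
        then show ?thesis using olt_Nil1[of b] \<open>a = Os []\<close> c c' Cons cs' by (simp add: hh_zero hh_pos olt_Os)
      qed
    next
      case False
      then have "b \<noteq> Os []" using l by auto
      then show ?thesis using False l c c' Cons cs' o by (simp add: hh_pos)
    qed
  qed
qed

lemma hh_inj: "hh c = hh c' \<Longrightarrow> c = c'"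
  using hh_mono olt_total olt_irrefl by metis

lemma hh_nmono: "\<not> olt c c' \<Longrightarrow> \<not> olt (hh c) (hh c')"
  using hh_mono olt_total olt_asym by metis

lemma wf_o0: "wf_ord (Os [])" by simp

lemma wf_hh: "wf_ord c \<Longrightarrow> wf_ord (hh c)"
proof (cases c rule: ord.exhaust)
  case (Os cs)
  assume w: "wf_ord c"
  show ?thesis
  proof (cases cs)
    case Nil then show ?thesis using Os by simp
  next
    case (Cons b bs)
    show ?thesis
    proof (cases "b = Os []")
      case False then show ?thesis using Os Cons w by (simp add: hh_pos)
    next
      case True
      have D: "\<forall>y\<in>set (Os [] # bs). \<not> olt (Os []) y"
        using w Os Cons True wf_append_D[of "[Os []]" bs] olt_irrefl by auto
      have "wf_ord (Os ([Os [], Os [], Os []] @ (Os [] # bs)))"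
        by (rule wf_append_intro) (use w Os Cons True D wf_rep[OF wf_o0, of 3] in \<open>auto simp: numeral_eq_Suc\<close>)
      then show ?thesis using Os Cons True by (simp add: hh_zero)
    qed
  qed
qed

lemma mc_nil: "mc (Os []) = 0"
  using mc_le[of "[]" 0] by simp

lemma mc_o3: "mc (Os [Os [], Os [], Os []]) = 3"
proof -
  have "mc (Os [Os [], Os [], Os []]) \<le> 3" by (subst mc_le) (simp add: mc_nil)
  moreover have "count_list [Os [], Os [], Os []] (Os []) \<le> mc (Os [Os [], Os [], Os []])"
    using mc_ge[of "Os []" "[Os [], Os [], Os []]"] by simp
  ultimately show ?thesis by simp
qed

lemma mc_hh: "mc (hh c) \<le> mc c + 3"
proof (cases c rule: ord.exhaust)
  case (Os cs)
  show ?thesis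
  proof (cases cs)
    case Nil then show ?thesis using Os by (simp add: mc_o3)
  next
    case (Cons b bs)
    show ?thesis
    proof (cases "b = Os []")
      case False then show ?thesis using Os Cons by (simp add: hh_pos)
    next
      case True
      have "\<forall>a\<in>set (Os [] # Os [] # Os [] # Os [] # bs).
          count_list (Os [] # Os [] # Os [] # Os [] # bs) a \<le> mc c + 3 \<and> mc a \<le> mc c + 3"
      proof
        fix a assume a: "a \<in> set (Os [] # Os [] # Os [] # Os [] # bs)"
        then have a': "a \<in> set cs" using Os Cons True by auto
        have "count_list (Os [] # Os [] # Os [] # Os [] # bs) a \<le> count_list cs a + 3"
          using Cons True by simp
        then show "count_list (Os [] # Os [] # Os [] # Os [] # bs) a \<le> mc c + 3 \<and> mc a \<le> mc c + 3"
          using mc_ge[OF a'] Os by simp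
      qed
      then show ?thesis using Os Cons True mc_le by (simp add: hh_zero)
    qed
  qed
qed

lemma oadd_nat: "oadd (Os G) (onat n) = Os (G @ replicate n (Os []))"
  by (cases n) (simp_all add: onat_eq)

lemma Phi_eq: "Phi l (Os cs) = Os ((map hh cs @ [Os [Os [], Os [], Os []]]) @ replicate (l + 2) (Os []))"
proof -
  have "oadd (Os (map hh cs)) oomega3 = Os (map hh cs @ [Os [Os [], Os [], Os []]])"
    using hh_ge3 by (simp add: oomega3_def onat3 takeWhile_eq_all_conv)
  then show ?thesis
    unfolding Phi_def omul3 by (simp only: oadd_nat append_assoc replicate_add)
qed


lemma wf_Phi: "wf_ord (Os cs) \<Longrightarrow> wf_ord (Phi l (Os cs))"
proof -
  assume w: "wf_ord (Os cs)"
  have "wf_ord (Os (map hh cs))"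
  proof -
    have e1: "\<forall>a\<in>set (map hh cs). wf_ord a" using w wf_hh by (auto simp: wf_Os)
    have s: "sorted_wrt (\<lambda>a b. \<not> olt a b) cs" using w by (simp add: wf_Os)
    have "sorted_wrt (\<lambda>x y. \<not> olt (hh x) (hh y)) cs"
      by (rule sorted_wrt_mono_rel[OF _ s]) (simp add: hh_nmono)
    then have "sorted_wrt (\<lambda>a b. \<not> olt a b) (map hh cs)" by (simp add: sorted_wrt_map)
    then show ?thesis using e1 by (simp add: wf_Os)
  qed
  then have "wf_ord (Os (map hh cs @ [Os [Os [], Os [], Os []]]))"
    using wf_append_intro[of "map hh cs" "[Os [Os [], Os [], Os []]]"] hh_ge3 by simp
  then have "wf_ord (Os ((map hh cs @ [Os [Os [], Os [], Os []]]) @ replicate (l + 2) (Os [])))"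
    using wf_append_intro[of "map hh cs @ [Os [Os [], Os [], Os []]]" "replicate (l + 2) (Os [])"]
      wf_rep[OF wf_o0, of "l + 2"] by simp
  then show ?thesis by (simp only: Phi_eq)
qed

lemma count_list_map_hh: "count_list (map hh xs) (hh x) = count_list xs x"
  by (induction xs) (auto dest: hh_inj)

lemma mc_Phi: "mc (Phi l (Os cs)) \<le> max (mc (Os cs) + 3) (l + 2)"
proof -
  let ?o3 = "Os [Os [], Os [], Os []]"
  let ?L = "(map hh cs @ [?o3]) @ replicate (l + 2) (Os [])"
  let ?M = "max (mc (Os cs) + 3) (l + 2)"
  have n0: "Os [] \<notin> set (map hh cs)"
  proof
    assume "Os [] \<in> set (map hh cs)"
    then obtain c where "Os [] = hh c" by auto
    then show False using hh_ne0 by metis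
  qed
  have "\<forall>a\<in>set ?L. count_list ?L a \<le> ?M \<and> mc a \<le> ?M"
  proof
    fix a assume a: "a \<in> set ?L"
    show "count_list ?L a \<le> ?M \<and> mc a \<le> ?M"
    proof (cases "a = Os []")
      case True
      then have "count_list ?L a = l + 2" using n0 by (simp add: count_list_0_iff)
      then show ?thesis using True mc_nil by simp
    next
      case False
      then have a2: "a \<in> set (map hh cs @ [?o3])" using a by auto
      have cL: "count_list ?L a = count_list (map hh cs) a + (if a = ?o3 then 1 else 0)"
        using False by simp
      show ?thesis
      proof (cases "a = ?o3")
        case True
        have "count_list (map hh cs) a = count_list cs (Os [])"
          using True count_list_map_hh[of cs "Os []"] by simp
        also have "\<dots> \<le> mc (Os cs)" by (rule count_list_le_mc)
        finally show ?thesis using cL True mc_o3 by (auto simp: max_def)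
      next
        case False
        then obtain c where c: "c \<in> set cs" "a = hh c" using a2 by auto
        have "count_list (map hh cs) a = count_list cs c" using c count_list_map_hh by simp
        also have "\<dots> \<le> mc (Os cs)" by (rule count_list_le_mc)
        finally have 1: "count_list ?L a \<le> mc (Os cs)" using cL False by simp
        have "mc a \<le> mc c + 3" using c mc_hh by simp
        also have "\<dots> \<le> mc (Os cs) + 3" using mc_ge[OF c(1)] by simp
        finally have 2: "mc a \<le> mc (Os cs) + 3" .
        have 3: "count_list ?L a \<le> ?M" using 1 by (rule order_trans) simp
        have 4: "mc a \<le> ?M" using 2 by (rule order_trans) simp
        show ?thesis using 3 4 by blast
      qed
    qed
  qed
  then show ?thesis by (simp only: Phi_eq mc_le)
qed

lemma lexlt_map_hh: "lexlt xs ys \<Longrightarrow> lexlt (map hh xs) (map hh ys)"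
proof (induction xs arbitrary: ys)
  case Nil then show ?case by simp
next
  case (Cons x xs)
  then obtain y ys' where "ys = y # ys'" by (cases ys) auto
  then show ?case using Cons hh_mono by auto
qed

lemma lexlt_diff: "lexlt xs ys \<Longrightarrow> (\<forall>r r'. lexlt (xs @ r) (ys @ r')) \<or> (\<exists>d ds. ys = xs @ d # ds)"
proof (induction xs arbitrary: ys)
  case Nil then show ?case by (cases ys) auto
next
  case (Cons x xs)
  then obtain y ys' where ys: "ys = y # ys'" by (cases ys) auto
  then have "olt x y \<or> (x = y \<and> lexlt xs ys')" using Cons.prems by simp
  then show ?case
  proof
    assume "olt x y" then show ?thesis using ys by simp
  next
    assume "x = y \<and> lexlt xs ys'"
    then show ?thesis using Cons.IH[of ys'] ys by auto
  qed
qed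

lemma Phi_less: "olt (Os cs') (Os cs) \<Longrightarrow> 1 \<le> m \<Longrightarrow>
  olt (Phi l (Os cs')) (Os (map hh cs @ replicate m (Os [Os [], Os []])))"
proof -
  assume o: "olt (Os cs') (Os cs)" and m: "1 \<le> m"
  let ?o3 = "Os [Os [], Os [], Os []]"
  have "lexlt (map hh cs') (map hh cs)" using o lexlt_map_hh by (simp add: olt_Os)
  from lexlt_diff[OF this]
  have "lexlt ((map hh cs' @ [?o3]) @ replicate (l + 2) (Os [])) (map hh cs @ replicate m (Os [Os [], Os []]))"
  proof
    assume "\<forall>r r'. lexlt (map hh cs' @ r) (map hh cs @ r')"
    then show ?thesis by simp
  next
    assume "\<exists>d ds. map hh cs = map hh cs' @ d # ds"
    then obtain d ds where dd: "map hh cs = map hh cs' @ d # ds" by blast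
    then have "d \<in> set (map hh cs)" by simp
    then obtain c where c: "d = hh c" by auto
    have "lexlt ([?o3] @ replicate (l + 2) (Os [])) (d # ds @ replicate m (Os [Os [], Os []]))"
    proof (cases "c = Os []")
      case False then show ?thesis using hh_gt3[OF False] c by simp
    next
      case True
      obtain y ys where y: "ds @ replicate m (Os [Os [], Os []]) = y # ys" and yne: "y \<noteq> Os []"
      proof (cases ds)
        case Nil
        obtain m' where "m = Suc m'" using m by (cases m) auto
        then show ?thesis using that Nil by simp
      next
        case (Cons y ys)
        have "y \<in> set (map hh cs)" using dd Cons by simp
        then have "y \<noteq> Os []" using hh_ne0 by auto
        then show ?thesis using that Cons by simp
      qed
      then show ?thesis using True c olt_Nil1[OF yne] by (simp add: olt_irrefl)
    qed
    then show ?thesis using dd by simp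
  qed
  then show ?thesis by (simp add: Phi_eq olt_Os)
qed


lemma E3_mono: "y \<le> y' \<Longrightarrow> (2::nat)^2^2^y \<le> 2^2^2^y'"
proof -
  assume "y \<le> y'"
  then have "(2::nat)^y \<le> 2^y'" by (rule power_increasing) simp
  then have "(2::nat)^2^y \<le> 2^2^y'" by (rule power_increasing) simp
  then show "(2::nat)^2^2^y \<le> 2^2^2^y'" by (rule power_increasing) simp
qed

lemma pow_aux: "2 \<le> B \<Longrightarrow> (2::nat)^B + 3 < 2^(B*B)"
proof -
  assume B: "2 \<le> B"
  have "2 * B \<le> B * B" using B by (rule mult_le_mono1)
  then have "B + 2 \<le> B * B" using B by linarith
  then have "(2::nat)^(B + 2) \<le> 2^(B * B)" by (rule power_increasing) simp
  moreover have "(2::nat)^(B+2) = 4 * 2^B" by (simp add: power_add)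
  moreover have "(2::nat)^2 \<le> 2^B" using B by (rule power_increasing) simp
  then have "(4::nat) \<le> 2^B" by simp
  ultimately show ?thesis by linarith
qed

lemma E3_step: "(2::nat)^2^2^y + 3 < 2^2^2^(Suc y)"
proof -
  have B: "(2::nat) \<le> 2^2^y"
  proof -
    have "(2::nat)^1 \<le> 2^2^y" by (rule power_increasing) simp_all
    then show ?thesis by simp
  qed
  have "(2::nat)^2^(Suc y) = 2^(2^y + 2^y)" by (simp add: mult_2)
  also have "\<dots> = 2^2^y * 2^2^y" by (rule power_add)
  finally have "(2::nat)^2^(Suc y) = 2^2^y * 2^2^y" .
  then have "(2::nat)^2^2^(Suc y) = 2^(2^2^y * 2^2^y)" by simp
  then show ?thesis using pow_aux[OF B] by simp
qed

lemma nth_gap: "sorted_wrt (<) xs \<Longrightarrow> p \<le> q \<Longrightarrow> q < length xs \<Longrightarrow> xs ! p + (q - p) \<le> (xs ! q :: nat)"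
proof (induction q)
  case 0 then show ?case by simp
next
  case (Suc q)
  show ?case
  proof (cases "p = Suc q")
    case True then show ?thesis by simp
  next
    case False
    then have pq: "p \<le> q" using Suc.prems by simp
    have "xs ! p + (q - p) \<le> xs ! q" using Suc.IH Suc.prems pq by simp
    moreover have "xs ! q < xs ! Suc q" using sorted_wrt_nth_less[OF Suc.prems(1)] Suc.prems by simp
    ultimately show ?thesis using pq by simp
  qed
qed

lemma Phi_ne: "Phi l \<gamma> \<noteq> Os []"
  by (cases \<gamma>) (simp add: Phi_eq)

theorem lemma3p1:
  fixes l j :: nat and X :: "nat set" and \<gamma> :: "nat \<Rightarrow> ord"
  assumes "finite X"
    and "\<forall>x\<in>X. x > 2"
    and "large (Phi l (\<gamma> 0)) X"
    and "\<forall>i\<le>j. wf_ord (\<gamma> i)"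
    and "\<forall>i<j. olt (\<gamma> (Suc i)) (\<gamma> i)"
    and "\<forall>i\<le>j. i < card X \<longrightarrow> mc (\<gamma> i) \<le> E (sorted_list_of_set X ! i + l)"
  shows "j < card X"
proof -
  define xl where "xl = sorted_list_of_set X"
  have sxl: "sorted_wrt (<) xl" by (simp add: xl_def)
  have len: "length xl = card X" by (simp add: xl_def)
  have setx: "set xl = X" using assms(1) by (simp add: xl_def)
  have gt2: "\<forall>x\<in>set xl. 2 < x" using assms(2) setx by simp
  have L0: "foldl fs (Phi l (\<gamma> 0)) xl = Os []" using assms(3) by (simp add: large_def fs_iter_def xl_def)
  have key: "i \<le> j \<Longrightarrow> \<exists>k\<ge>i. foldl fs (Phi l (\<gamma> i)) (drop k xl) = Os []" for i
  proof (induction i)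
    case 0 then show ?case using L0 by (intro exI[of _ 0]) simp
  next
    case (Suc i)
    then have ij: "i < j" by simp
    obtain k where k: "i \<le> k" "foldl fs (Phi l (\<gamma> i)) (drop k xl) = Os []" using Suc by auto
    obtain cs where gi: "\<gamma> i = Os cs" by (cases "\<gamma> i") auto
    obtain cs' where gi': "\<gamma> (Suc i) = Os cs'" by (cases "\<gamma> (Suc i)") auto
    let ?G = "map hh cs"
    let ?o3 = "Os [Os [], Os [], Os []]"
    let ?o2 = "Os [Os [], Os []]"
    have f1: "foldl fs (Os ((?G @ [?o3]) @ replicate (l + 2) (Os []))) (drop k xl) = Os []"
      using k gi by (simp only: Phi_eq)
    have c2: "foldl fs (Os (?G @ [?o3])) (drop (l + 2) (drop k xl)) = Os []"
      using c_phase[OF _ f1] by simp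
    define q where "q = k + l + 2"
    have dd: "drop (l + 2) (drop k xl) = drop q xl" by (simp add: q_def add.commute)
    have qlt: "q < length xl"
    proof (rule ccontr)
      assume "\<not> q < length xl"
      then have "drop q xl = []" by simp
      then show False using c2 dd by simp
    qed
    define u where "u = xl ! q"
    define zs where "zs = drop (Suc q) xl"
    have dq: "drop q xl = u # zs" using qlt by (simp add: u_def zs_def Cons_nth_drop_Suc)
    have "fs (Os (?G @ [?o3])) u = Os (?G @ replicate u ?o2)"
      using fs_succ[of ?G "[Os [], Os []]" u] by simp
    then have f3: "foldl fs (Os (?G @ replicate u ?o2)) zs = Os []" using c2 dd dq by simp
    have i1: "Suc i < length xl" using qlt k by (simp add: q_def)
    have ug: "xl ! (Suc i) + (q - Suc i) \<le> u"
      using nth_gap[OF sxl, of "Suc i" q] qlt k by (simp add: u_def q_def)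
    have x2: "2 < xl ! (Suc i)" using gt2 i1 nth_mem by blast
    have u1: "xl ! (Suc i) + l + 1 \<le> u" using ug k by (simp add: q_def)
    have u4: "4 \<le> u" using u1 x2 by simp
    have "sorted_wrt (<) (drop q xl)" using sxl by simp
    then have sdq: "sorted_wrt (<) (u # zs)" using dq by simp
    then have szs: "sorted_wrt (<) zs" by simp
    have gzs: "\<forall>z\<in>set zs. Suc u \<le> z" using sdq by auto
    obtain t where t: "foldl fs (Os (?G @ replicate (u - 3) ?o2)) (drop t zs) = Os []"
        "\<forall>z\<in>set (drop t zs). 2^2^2^(Suc u) \<le> z"
      using a_three[OF u4 szs gzs f3] by blast
    let ?\<beta> = "Phi l (\<gamma> (Suc i))"
    have w\<beta>: "wf_ord ?\<beta>" using assms(4) Suc.prems gi' wf_Phi by auto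
    have o\<beta>: "olt ?\<beta> (Os (?G @ replicate (u - 3) ?o2))"
    proof -
      have "olt (\<gamma> (Suc i)) (\<gamma> i)" using assms(5) ij by blast
      then have "olt (Os cs') (Os cs)" using gi gi' by (simp only:)
      moreover have "1 \<le> u - 3" using u4 by simp
      ultimately show ?thesis using Phi_less[of cs' cs "u - 3" l] gi' by (simp only:)
    qed
    define y where "y = xl ! (Suc i) + l"
    have mcg: "mc (\<gamma> (Suc i)) \<le> E y" using assms(6) Suc.prems i1 len by (simp add: y_def xl_def)
    have m1: "mc ?\<beta> \<le> max (E y + 3) (l + 2)" using mc_Phi[of l cs'] gi' mcg by simp
    have yu: "Suc y \<le> Suc u" using u1 by (simp add: y_def)
    have "E y + 3 < 2^2^2^(Suc y)" using E3_step[of y] by (simp add: E_def)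
    also have "\<dots> \<le> 2^2^2^(Suc u)" using E3_mono[OF yu] .
    finally have b1: "E y + 3 < 2^2^2^(Suc u)" .
    have "l + 2 < (2::nat)^2^2^(Suc u)"
    proof -
      have "l + 2 \<le> Suc u" using u1 by simp
      also have "Suc u < 2^(Suc u)" by (rule less_exp)
      also have "(2::nat)^(Suc u) < 2^2^(Suc u)" by (rule less_exp)
      also have "(2::nat)^2^(Suc u) < 2^2^2^(Suc u)" by (rule less_exp)
      finally show ?thesis .
    qed
    then have mb: "mc ?\<beta> < 2^2^2^(Suc u)" using m1 b1 by simp
    have mz: "\<forall>z\<in>set (drop t zs). mc ?\<beta> < z"
    proof
      fix z assume "z \<in> set (drop t zs)"
      then have "2^2^2^(Suc u) \<le> z" using t(2) by blast
      then show "mc ?\<beta> < z" by (rule less_le_trans[OF mb])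
    qed
    have sz: "sorted_wrt (<) (drop t zs)" using szs by simp
    have "foldl fs ?\<beta> (drop t zs) = Os []"
      by (rule large_mono[OF sz mz w\<beta> disjI2[OF o\<beta>] t(1)])
    then have r1: "foldl fs ?\<beta> (drop (t + Suc q) xl) = Os []" by (simp add: zs_def)
    have r2: "Suc i \<le> t + Suc q" using k by (simp add: q_def)
    show ?case using r1 r2 by (intro exI[of _ "t + Suc q"]) (simp only: simp_thms)
  qed
  obtain k where kk: "j \<le> k" "foldl fs (Phi l (\<gamma> j)) (drop k xl) = Os []" using key by blast
  show ?thesis
  proof (rule ccontr)
    assume "\<not> j < card X"
    then have "drop k xl = []" using kk len by simp
    then show False using kk Phi_ne by simp
  qed
qed

end
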